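(* Let $n\ge 2$ and let $R$ be a real polynomial of degree $n-1$. Let $a_1,\dots,a_{n-1}\in\mathbb C$ be the numbers (unique up to permutation) such that, writing $e^xR(x)=\sum_{j\ge 0}\gamma_j x^j/j!$, one has $\gamma_j=c\prod_{i=1}^{n-1}(j+a_i)$ for all integers $j\ge0$, for some constant $c\ne 0$ (equivalently, $e^xR$ is, up to a nonzero constant factor, the Schur–Szegő composition of the $n-1$ factors $e^x(1+x/a_i)$ for $a_i\neq 0$ and $e^xx$ for $a_i=0$). (1) If $R$ has exactly $m\ge0$ positive roots counted with multiplicity and a root of multiplicity exactly $k\ge 0$ at $0$, then among the numbers $a_i$ there are at least $m+\max(0,k-1)$ pairwise distinct negative real numbers, $\max(0,k-1)$ of which are $-1,-2,\dots,-(k-1)$; moreover, if $k\ge1$, then one of the $a_i$ equals $0$ (i.e. one composition factor equals $e^xx$). (2) If exactly $q$ of the numbers $a_i$ equal $0$ and exactly $q_1$ of them are positive real numbers, then $R$ has at least $q_1+\max(0,q-1)$ negative roots counted with multiplicity; and if $q\ge1$, then $R(0)=0$.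
   Context: Schur–Szegő composition of entire functions: for $f=\sum_{j\ge0}\gamma_jx^j/j!$ and $g=\sum_{j\ge0}\delta_jx^j/j!$ (everywhere convergent series) one sets $f*g=\sum_{j\ge0}\gamma_j\delta_jx^j/j!$; it is commutative and associative. One has $e^x(1+x/a)=\sum_j\frac{a+j}{a}\frac{x^j}{j!}$ and $e^xx=\sum_j j\frac{x^j}{j!}$, $e^x\cdot c=\sum_j c\frac{x^j}{j!}$. For a polynomial $R$ of degree $n-1$, the coefficient $\gamma_j$ of $x^j/j!$ in $e^xR$ is a polynomial in $j$ of degree $n-1$, whose roots are the numbers $-a_i$; this defines the $a_i$ (unique up to permutation). For real $R$ the non-real $a_i$ come in complex conjugate pairs. *)

theory Defs
  imports "HOL-Computational_Algebra.Computational_Algebra"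
begin

definition exp_poly_coeff :: "real poly \<Rightarrow> nat \<Rightarrow> real" where
  "exp_poly_coeff R j = fact j * fps_nth (fps_exp 1 * fps_of_poly R) j"

end

theory Submission
  imports Defs "HOL-Real_Asymp.Real_Asymp"
begin


definition bq :: "real poly \<Rightarrow> nat \<Rightarrow> real" where
  "bq Q j = fps_nth (fps_exp 1 * fps_of_poly Q) j"

lemma E_bq: "exp_poly_coeff R j = fact j * bq R j"
  by (simp add: exp_poly_coeff_def bq_def)

definition Top :: "real \<Rightarrow> real poly \<Rightarrow> real poly" where
  "Top a f = pCons 0 (pderiv f + f) + smult a f"

lemma E_Top: "exp_poly_coeff (Top a f) j = (of_nat j + a) * exp_poly_coeff f j"
proof -
  define F where "F = fps_exp (1::real) * fps_of_poly f"
  define F0 where "F0 = fps_of_poly f"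
  have 1: "fps_of_poly (Top a f) = fps_X * (fps_deriv F0 + F0) + fps_const a * F0"
    unfolding Top_def F0_def
    by (simp only: fps_of_poly_add fps_of_poly_pCons fps_of_poly_pderiv fps_of_poly_smult) simp
  have 2: "fps_deriv F = F + fps_exp 1 * fps_deriv F0"
    unfolding F_def F0_def fps_deriv_mult fps_exp_deriv by simp
  have "fps_exp 1 * fps_of_poly (Top a f) = fps_X * fps_deriv F + fps_const a * F"
    unfolding 1 2 by (simp add: F_def F0_def distrib_left distrib_right mult.assoc mult.left_commute)
  hence "fps_nth (fps_exp 1 * fps_of_poly (Top a f)) j = of_nat j * F $ j + a * F $ j"
    by (cases j) (simp_all add: fps_X_mult_nth fps_deriv_nth)
  thus ?thesis unfolding exp_poly_coeff_def F_def by (simp add: algebra_simps)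
qed

lemma E_add: "exp_poly_coeff (p + q) j = exp_poly_coeff p j + exp_poly_coeff q j"
  by (simp add: exp_poly_coeff_def fps_of_poly_add algebra_simps)

lemma E_smult: "exp_poly_coeff (smult a p) j = a * exp_poly_coeff p j"
  by (simp add: exp_poly_coeff_def fps_of_poly_smult algebra_simps)

lemma E_zero[simp]: "exp_poly_coeff 0 j = 0"
  by (simp add: exp_poly_coeff_def)

lemma E_one: "exp_poly_coeff 1 j = 1"
  by (simp add: exp_poly_coeff_def)

lemma E_const: "exp_poly_coeff [:a:] j = a"
  using E_smult[of a 1 j] by (simp add: E_one)

lemma E_at0: "exp_poly_coeff R 0 = poly R 0"
  by (simp add: exp_poly_coeff_def fps_mult_nth poly_0_coeff_0)

lemma E_pCons0: "exp_poly_coeff (pCons 0 p) j = (if j = 0 then 0 else of_nat j * exp_poly_coeff p (j - 1))"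
proof -
  have eq: "fps_exp 1 * fps_of_poly (pCons 0 p) = fps_X * (fps_exp 1 * fps_of_poly p)"
    by (simp add: fps_of_poly_pCons algebra_simps)
  show ?thesis unfolding exp_poly_coeff_def eq
    by (cases j) (simp_all add: fps_X_mult_nth)
qed

lemma E_pCons: "exp_poly_coeff (pCons a p) j = a + (if j = 0 then 0 else of_nat j * exp_poly_coeff p (j - 1))"
proof -
  have eq: "pCons a p = [:a:] + pCons 0 p" by simp
  have "exp_poly_coeff (pCons a p) j = exp_poly_coeff ([:a:] + pCons 0 p) j"
    by (rule arg_cong[of _ _ "\<lambda>x. exp_poly_coeff x j", OF eq])
  also have "\<dots> = a + exp_poly_coeff (pCons 0 p) j" by (simp only: E_add E_const)
  finally show ?thesis by (simp only: E_pCons0)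
qed

lemma E_inj:
  assumes "\<forall>j. exp_poly_coeff p j = 0" shows "p = 0"
proof -
  have "\<forall>i\<le>j. coeff p i = 0" for j
  proof (induction j)
    case 0
    then show ?case using assms E_at0[of p] by (simp add: poly_0_coeff_0)
  next
    case (Suc j)
    have h: "fps_nth (fps_exp 1 * fps_of_poly p) (Suc j) = 0"
      using assms[rule_format, of "Suc j"] by (simp add: exp_poly_coeff_def)
    have "fps_nth (fps_exp 1 * fps_of_poly p) (Suc j) = (\<Sum>i=0..Suc j. coeff p i / fact (Suc j - i))"
      by (simp only: mult.commute[of "fps_exp 1"] fps_mult_nth) (simp add: divide_simps)
    also have "\<dots> = (\<Sum>i=0..j. coeff p i / fact (Suc j - i)) + coeff p (Suc j)"
      by (simp only: sum.atLeast0_atMost_Suc) simp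
    also have "(\<Sum>i=0..j. coeff p i / fact (Suc j - i)) = 0"
      using Suc.IH by simp
    finally have "coeff p (Suc j) = 0" using h by simp
    then show ?case using Suc.IH le_Suc_eq by auto
  qed
  thus ?thesis by (intro poly_eqI) auto
qed

lemma E_eqI:
  assumes "\<forall>j. exp_poly_coeff p j = exp_poly_coeff q j" shows "p = q"
proof -
  have "\<forall>j. exp_poly_coeff (p - q) j = 0"
  proof
    fix j
    have "exp_poly_coeff p j = exp_poly_coeff (p - q) j + exp_poly_coeff q j"
      using E_add[of "p - q" q j] by simp
    thus "exp_poly_coeff (p - q) j = 0" using assms by simp
  qed
  from E_inj[OF this] show ?thesis by simp
qed

lemma E_poly_ex:
  "\<exists>P. degree P = degree Q \<and> lead_coeff P = lead_coeff Q \<and> (\<forall>j. exp_poly_coeff Q j = poly P (of_nat j))"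
proof (induction Q)
  case 0
  then show ?case by (intro exI[of _ 0]) simp
next
  case (pCons a Q)
  show ?case
  proof (cases "Q = 0")
    case True
    then show ?thesis by (intro exI[of _ "[:a:]"]) (simp add: E_const)
  next
    case False
    from pCons.IH obtain P where P: "degree P = degree Q" "lead_coeff P = lead_coeff Q"
      "\<forall>j. exp_poly_coeff Q j = poly P (of_nat j)" by blast
    have PQ: "P \<noteq> 0" using False P(2) by auto
    define P' where "P' = pcompose P [:-1,1:]"
    have dP': "degree P' = degree P" unfolding P'_def by (simp add: degree_pcompose)
    have lP': "lead_coeff P' = lead_coeff P" unfolding P'_def by (simp add: lead_coeff_comp)
    have P'0: "P' \<noteq> 0" using lP' PQ by auto
    show ?thesis
    proof (intro exI[of _ "pCons a P'"] conjI allI)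
      show "degree (pCons a P') = degree (pCons a Q)" using P'0 False P(1) dP' by simp
      show "lead_coeff (pCons a P') = lead_coeff (pCons a Q)" using P'0 False P(1,2) dP' lP' by simp
      fix j
      show "exp_poly_coeff (pCons a Q) j = poly (pCons a P') (of_nat j)"
        unfolding E_pCons P'_def by (cases j) (simp_all add: P(3) poly_pcompose)
    qed
  qed
qed

lemma E_surj: "\<exists>R. \<forall>j. exp_poly_coeff R j = poly P (of_nat j)"
proof (induction P)
  case 0
  then show ?case by (intro exI[of _ 0]) simp
next
  case (pCons a P)
  then obtain R where R: "\<forall>j. exp_poly_coeff R j = poly P (of_nat j)" by blast
  show ?case
    by (intro exI[of _ "[:a:] + Top 0 R"]) (simp add: E_add E_const E_Top R)
qed



definition cnt :: "(real \<Rightarrow> bool) \<Rightarrow> real poly \<Rightarrow> nat" where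
  "cnt P f = (\<Sum>x\<in>{x. P x \<and> poly f x = 0}. order x f)"

lemma order_pos_root: "order x f > 0 \<Longrightarrow> poly f x = 0"
  using order_root[of f x] by auto

lemma cnt_finite: "(f::real poly) \<noteq> 0 \<Longrightarrow> finite {x. P x \<and> poly f x = 0}"
  using poly_roots_finite[of f] by (rule rev_finite_subset) auto

lemma cnt_ge_sum:
  assumes "f \<noteq> 0" "finite S" "\<forall>x\<in>S. P x"
  shows "(\<Sum>x\<in>S. order x f) \<le> cnt P f"
proof -
  have "(\<Sum>x\<in>S. order x f) = (\<Sum>x\<in>S \<inter> {x. P x \<and> poly f x = 0}. order x f)"
    by (rule sum.mono_neutral_right) (use assms in \<open>auto intro: order_0I order_pos_root\<close>)
  also have "\<dots> \<le> cnt P f" unfolding cnt_def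
    by (rule sum_mono2[OF cnt_finite[OF assms(1)]]) auto
  finally show ?thesis .
qed

lemma cnt_sum_superset:
  assumes "f \<noteq> 0" "finite S" "{x. P x \<and> poly f x = 0} \<subseteq> S" "\<forall>x\<in>S. P x"
  shows "cnt P f = (\<Sum>x\<in>S. order x f)"
  unfolding cnt_def
  by (rule sum.mono_neutral_left) (use assms in \<open>auto intro: order_0I order_pos_root\<close>)

lemma cnt_mult:
  assumes "f \<noteq> 0" "g \<noteq> 0"
  shows "cnt P (f * g) = cnt P f + cnt P g"
proof -
  define Z where "Z = {x. P x \<and> poly (f * g) x = 0}"
  have fZ: "finite Z" unfolding Z_def using cnt_finite[of "f*g" P] assms by simp
  have "cnt P (f * g) = (\<Sum>x\<in>Z. order x f + order x g)"
    unfolding cnt_def Z_def using assms by (intro sum.cong) (auto simp: order_mult)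
  also have "\<dots> = (\<Sum>x\<in>Z. order x f) + (\<Sum>x\<in>Z. order x g)" by (rule sum.distrib)
  also have "(\<Sum>x\<in>Z. order x f) = cnt P f"
    by (rule cnt_sum_superset[symmetric]) (use assms fZ in \<open>auto simp: Z_def\<close>)
  also have "(\<Sum>x\<in>Z. order x g) = cnt P g"
    by (rule cnt_sum_superset[symmetric]) (use assms fZ in \<open>auto simp: Z_def\<close>)
  finally show ?thesis .
qed

lemma cnt_pos: "f \<noteq> 0 \<Longrightarrow> P x \<Longrightarrow> poly f x = 0 \<Longrightarrow> cnt P f > 0"
  using cnt_ge_sum[of f "{x}" P] order_root[of f x] by auto

lemma cnt_linear: "P a \<Longrightarrow> cnt P [:-a, 1:] = 1"
proof -
  assume "P a"
  have "{x. P x \<and> poly [:-a, 1:] x = 0} = {a}" using \<open>P a\<close> by auto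
  moreover have "order a [:-a, 1:] = 1" using order_power_n_n[of a 1] by simp
  ultimately show ?thesis unfolding cnt_def by simp
qed

lemma cnt_linear0: "\<not> P a \<Longrightarrow> cnt P [:-a, 1:] = 0"
proof -
  assume "\<not> P a"
  have "{x. P x \<and> poly [:-a, 1:] x = 0} = {}" using \<open>\<not> P a\<close> by auto
  thus ?thesis unfolding cnt_def by simp
qed



lemma crit_pos:
  fixes h D :: "real \<Rightarrow> real"
  assumes "u < y" "y < v" "v < 0"
    and der: "\<And>x. x < 0 \<Longrightarrow> (h has_real_derivative D x) (at x)"
    and "h u < h y" "h v < h y"
  shows "\<exists>c. u < c \<and> c < v \<and> D c = 0"
proof -
  have cont: "\<forall>x. u \<le> x \<and> x \<le> v \<longrightarrow> isCont h x"
    using der assms(3) by (meson DERIV_isCont le_less_trans)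
  obtain M where M: "\<forall>x. u \<le> x \<and> x \<le> v \<longrightarrow> h x \<le> M" "\<exists>x. u \<le> x \<and> x \<le> v \<and> h x = M"
    using isCont_eq_Ub[OF _ cont] assms(1,2) by auto
  then obtain x0 where x0: "u \<le> x0" "x0 \<le> v" "h x0 = M" by blast
  have "h y \<le> M" using M(1) assms(1,2) by auto
  hence "x0 \<noteq> u" "x0 \<noteq> v" using x0 assms(5,6) by auto
  hence x0': "u < x0" "x0 < v" using x0 by auto
  have "D x0 = 0"
  proof (rule DERIV_local_max[OF der[of x0]])
    show "x0 < 0" using x0' assms(3) by simp
    show "0 < min (x0 - u) (v - x0)" using x0' by simp
    show "\<forall>y. \<bar>x0 - y\<bar> < min (x0 - u) (v - x0) \<longrightarrow> h y \<le> h x0"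
      using M(1) x0(3) by (auto simp: abs_if split: if_splits)
  qed
  thus ?thesis using x0' by blast
qed

lemma crit:
  fixes h D :: "real \<Rightarrow> real"
  assumes "u < y" "y < v" "v < 0"
    and der: "\<And>x. x < 0 \<Longrightarrow> (h has_real_derivative D x) (at x)"
    and "\<bar>h u\<bar> < \<bar>h y\<bar>" "\<bar>h v\<bar> < \<bar>h y\<bar>"
  shows "\<exists>c. u < c \<and> c < v \<and> D c = 0"
proof (cases "h y > 0")
  case True
  then show ?thesis using crit_pos[OF assms(1-4)] assms(5,6) by auto
next
  case False
  have der': "\<And>x. x < 0 \<Longrightarrow> ((\<lambda>x. - h x) has_real_derivative - D x) (at x)"
    using der by (auto intro: DERIV_minus)
  have "- h u < - h y" "- h v < - h y" using False assms(5,6) by auto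
  from crit_pos[OF assms(1-3) der' this] show ?thesis by auto
qed

lemma rolle_count:
  fixes f g :: "real poly" and h D :: "real \<Rightarrow> real"
  assumes f0: "f \<noteq> 0" and g0: "g \<noteq> 0"
    and der: "\<And>x. x < 0 \<Longrightarrow> (h has_real_derivative D x) (at x)"
    and Dg: "\<And>x. x < 0 \<Longrightarrow> D x = 0 \<Longrightarrow> poly g x = 0"
    and hf: "\<And>x. x < 0 \<Longrightarrow> h x = 0 \<longleftrightarrow> poly f x = 0"
    and lim_bot: "(h \<longlongrightarrow> 0) at_bot"
    and ord: "\<And>x. x < 0 \<Longrightarrow> poly f x = 0 \<Longrightarrow> order x f \<le> Suc (order x g)"
    and lim0: "cond \<Longrightarrow> (h \<longlongrightarrow> 0) (at_left 0)"
  shows "cnt (\<lambda>x. x < 0) f + (if cond then 1 else 0) \<le> cnt (\<lambda>x. x < 0) g"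
proof -
  define X where "X = {x::real. x < 0 \<and> poly f x = 0}"
  have fX: "finite X" unfolding X_def using cnt_finite[OF f0] .
  define G where "G = X \<union> (if cond then {0} else {})"
  have fG: "finite G" using fX by (simp add: G_def)
  have G_le: "\<forall>x\<in>G. x \<le> 0" by (auto simp: G_def X_def)
  have G_neg: "\<forall>x\<in>G. x < 0 \<longrightarrow> x \<in> X" by (auto simp: G_def split: if_splits)
  have gap: "\<exists>c. c < x \<and> c < 0 \<and> poly g c = 0 \<and> (\<forall>w\<in>X. w < x \<longrightarrow> w < c)" if xG: "x \<in> G" for x
  proof -
    define B where "B = {w\<in>X. w < x}"
    have fB: "finite B" using fX by (simp add: B_def)
    have x0: "x \<le> 0" using G_le xG by auto
    obtain y u where yu: "u < y" "y < x" "poly f y \<noteq> 0" "\<bar>h u\<bar> < \<bar>h y\<bar>" "\<forall>w\<in>B. w \<le> u"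
    proof (cases "B = {}")
      case True
      define y where "y = x - 1"
      have y0: "y < 0" using x0 by (simp add: y_def)
      have py: "poly f y \<noteq> 0"
      proof
        assume "poly f y = 0"
        hence "y \<in> B" using y0 by (auto simp: B_def X_def y_def)
        thus False using True by simp
      qed
      hence hy: "\<bar>h y\<bar> > 0" using hf[OF y0] by auto
      have "eventually (\<lambda>t. dist (h t) 0 < \<bar>h y\<bar>) at_bot"
        using lim_bot hy by (rule tendstoD)
      then obtain N where N: "\<forall>t\<le>N. \<bar>h t\<bar> < \<bar>h y\<bar>"
        by (auto simp: eventually_at_bot_linorder)
      show ?thesis
        by (rule that[of "min N (y - 1)" y]) (use N py True in \<open>auto simp: y_def\<close>)
    next
      case False
      define L where "L = Max B"
      have LB: "L \<in> B" using False fB by (simp add: L_def)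
      have Lmax: "\<forall>w\<in>B. w \<le> L" using fB by (simp add: L_def)
      have Lx: "L < x" "poly f L = 0" "L < 0" using LB by (auto simp: B_def X_def)
      define y where "y = (L + x) / 2"
      have y: "L < y" "y < x" using Lx by (auto simp: y_def)
      have y0: "y < 0" using y x0 by simp
      have py: "poly f y \<noteq> 0"
      proof
        assume "poly f y = 0"
        hence "y \<in> B" using y0 y by (auto simp: B_def X_def)
        thus False using Lmax y by force
      qed
      have "h L = 0" using hf[OF Lx(3)] Lx(2) by simp
      moreover have "h y \<noteq> 0" using hf[OF y0] py by simp
      ultimately show ?thesis by (intro that[of L y]) (use y py Lmax in auto)
    qed
    have y0: "y < 0" using yu(2) x0 by simp
    obtain v where v: "y < v" "v \<le> x" "v < 0" "\<bar>h v\<bar> < \<bar>h y\<bar>"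
    proof (cases "x < 0")
      case True
      hence "x \<in> X" using G_neg xG by auto
      hence "h x = 0" using hf[OF True] by (simp add: X_def)
      moreover have "h y \<noteq> 0" using hf[OF y0] yu(3) by simp
      ultimately show ?thesis by (intro that[of x]) (use yu True in auto)
    next
      case False
      hence xz: "x = 0" using x0 by simp
      hence "x \<notin> X" by (simp add: X_def)
      hence cond using xG by (auto simp: G_def split: if_splits)
      have hy: "\<bar>h y\<bar> > 0" using hf[OF y0] yu(3) by auto
      have "eventually (\<lambda>t. dist (h t) 0 < \<bar>h y\<bar>) (at_left 0)"
        using lim0[OF \<open>cond\<close>] hy by (rule tendstoD)
      moreover have "eventually (\<lambda>t. t \<in> {y<..<0}) (at_left (0::real))"
        using y0 by (rule eventually_at_left_real)
      ultimately have "eventually (\<lambda>t. \<bar>h t\<bar> < \<bar>h y\<bar> \<and> y < t \<and> t < 0) (at_left (0::real))"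
        by eventually_elim auto
      then obtain t where "\<bar>h t\<bar> < \<bar>h y\<bar> \<and> y < t \<and> t < 0"
        using eventually_happens[of _ "at_left (0::real)"] trivial_limit_at_left_real by blast
      then show ?thesis by (intro that[of t]) (use xz in auto)
    qed
    obtain c where c: "u < c" "c < v" "D c = 0"
      using crit[OF yu(1) v(1) v(3) der yu(4) v(4)] by blast
    have "c < 0" using c v by simp
    hence "poly g c = 0" using Dg c by simp
    moreover have "\<forall>w\<in>X. w < x \<longrightarrow> w < c" using yu(5) c(1) by (auto simp: B_def)
    ultimately show ?thesis using c v \<open>c < 0\<close> by (intro exI[of _ c]) auto
  qed
  obtain z where z: "\<forall>x\<in>G. z x < x \<and> z x < 0 \<and> poly g (z x) = 0 \<and> (\<forall>w\<in>X. w < x \<longrightarrow> w < z x)"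
  proof -
    have ex: "\<forall>x\<in>G. \<exists>c. c < x \<and> c < 0 \<and> poly g c = 0 \<and> (\<forall>w\<in>X. w < x \<longrightarrow> w < c)"
      by (intro ballI gap)
    from bchoice[OF ex] obtain z0 where
      "\<forall>x\<in>G. z0 x < x \<and> z0 x < 0 \<and> poly g (z0 x) = 0 \<and> (\<forall>w\<in>X. w < x \<longrightarrow> w < z0 x)" ..
    thus ?thesis using that by blast
  qed
  have inj: "inj_on z G"
  proof (rule inj_onI)
    fix x1 x2 assume x12: "x1 \<in> G" "x2 \<in> G" "z x1 = z x2"
    show "x1 = x2"
    proof (rule ccontr)
      assume "x1 \<noteq> x2"
      then consider "x1 < x2" | "x2 < x1" by linarith
      then show False
      proof cases
        case 1
        have "x2 \<le> 0" using G_le x12(2) by blast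
        hence "x1 < 0" using 1 by simp
        hence X1: "x1 \<in> X" using G_neg x12(1) by blast
        have a: "z x1 < x1" using z x12(1) by blast
        have b: "x1 < z x2" using z x12(2) X1 1 by blast
        show False using a b x12(3) by simp
      next
        case 2
        have "x1 \<le> 0" using G_le x12(1) by blast
        hence "x2 < 0" using 2 by simp
        hence X2: "x2 \<in> X" using G_neg x12(2) by blast
        have a: "z x2 < x2" using z x12(2) by blast
        have b: "x2 < z x1" using z x12(1) X2 2 by blast
        show False using a b x12(3) by simp
      qed
    qed
  qed
  define Zg where "Zg = z ` G"
  have fZ: "finite Zg" using fG by (simp add: Zg_def)
  have cardZ: "card Zg = card G" using card_image[OF inj] by (simp add: Zg_def)
  have disj: "X \<inter> Zg = {}"
  proof (rule ccontr)
    assume "X \<inter> Zg \<noteq> {}"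
    then obtain x where "x \<in> G" "z x \<in> X" by (auto simp: Zg_def)
    thus False using z by force
  qed
  have cardG: "card G = card X + (if cond then 1 else 0)"
    using fX by (auto simp: G_def X_def)
  have s1: "cnt (\<lambda>x. x < 0) f \<le> (\<Sum>x\<in>X. order x g) + card X"
  proof -
    have "cnt (\<lambda>x. x < 0) f = (\<Sum>x\<in>X. order x f)" by (simp add: cnt_def X_def)
    also have "\<dots> \<le> (\<Sum>x\<in>X. Suc (order x g))"
      by (rule sum_mono) (use ord in \<open>auto simp: X_def\<close>)
    also have "\<dots> = (\<Sum>x\<in>X. order x g) + card X" unfolding Suc_eq_plus1 sum.distrib by simp
    finally show ?thesis .
  qed
  have s2: "card Zg \<le> (\<Sum>x\<in>Zg. order x g)"
  proof -
    have "card Zg = (\<Sum>x\<in>Zg. 1)" by simp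
    also have "\<dots> \<le> (\<Sum>x\<in>Zg. order x g)"
    proof (rule sum_mono)
      fix x assume "x \<in> Zg"
      hence "poly g x = 0" using z by (auto simp: Zg_def)
      thus "1 \<le> order x g" using order_root[of g x] g0 by auto
    qed
    finally show ?thesis .
  qed
  have s3: "(\<Sum>x\<in>X. order x g) + (\<Sum>x\<in>Zg. order x g) \<le> cnt (\<lambda>x. x < 0) g"
  proof -
    have "(\<Sum>x\<in>X. order x g) + (\<Sum>x\<in>Zg. order x g) = (\<Sum>x\<in>X \<union> Zg. order x g)"
      by (rule sum.union_disjoint[OF fX fZ disj, symmetric])
    also have "\<dots> \<le> cnt (\<lambda>x. x < 0) g"
      by (rule cnt_ge_sum[OF g0]) (use fX fZ z in \<open>auto simp: X_def Zg_def\<close>)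
    finally show ?thesis .
  qed
  show ?thesis using s1 s2 s3 cardZ cardG by linarith
qed



lemma pc0: "pCons 0 (p::real poly) = [:0, 1:] * p"
proof -
  have "p * [:0, 1:] = pCons 0 p" by simp
  thus ?thesis by (simp add: mult.commute)
qed

lemma Top_alt: "Top a f = [:0, 1:] * (pderiv f + f) + smult a f"
  unfolding Top_def by (simp only: pc0[symmetric])

lemma Top_poly: "poly (Top a f) x = x * (poly (pderiv f) x + poly f x) + a * poly f x"
  by (simp add: Top_def)

lemma Top_nonzero: assumes "f \<noteq> 0" shows "Top a f \<noteq> 0"
proof -
  have "coeff (Top a f) (Suc (degree f)) = lead_coeff f"
    by (simp add: Top_def coeff_pderiv coeff_eq_0)
  thus ?thesis using assms by auto
qed

lemma Top_ord:
  fixes f :: "real poly"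
  assumes f0: "f \<noteq> 0" and r: "poly f x = 0"
  shows "order x f \<le> Suc (order x (Top a f))"
proof -
  have d0: "[:-x, 1:] ^ (order x f - 1) dvd [:-x, 1:] ^ order x f" by (simp add: le_imp_power_dvd)
  have d1: "[:-x, 1:] ^ (order x f - 1) dvd f" by (rule dvd_trans[OF d0 order_1])
  have d2: "[:-x, 1:] ^ (order x f - 1) dvd pderiv f"
  proof (cases "pderiv f = 0")
    case True then show ?thesis by simp
  next
    case False
    have e: "order x f - 1 = order x (pderiv f)" using order_pderiv[OF f0 r] by simp
    show ?thesis unfolding e by (rule order_1)
  qed
  have d3: "[:-x, 1:] ^ (order x f - 1) dvd [:0, 1:] * (pderiv f + f)"
    by (rule dvd_mult[OF dvd_add[OF d2 d1]])
  have d4: "[:-x, 1:] ^ (order x f - 1) dvd smult a f" by (rule dvd_smult[OF d1])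
  have "[:-x, 1:] ^ (order x f - 1) dvd Top a f"
    unfolding Top_alt by (rule dvd_add[OF d3 d4])
  hence "order x f - 1 \<le> order x (Top a f)"
    using order_divides Top_nonzero[OF f0] by blast
  thus ?thesis by simp
qed

lemma powr_exp_lim0: "((\<lambda>y::real. y powr b * exp (-y)) \<longlongrightarrow> 0) at_top"
  by real_asymp

lemma h_lim_bot:
  fixes f :: "real poly"
  shows "((\<lambda>x. (-x) powr a * exp x * poly f x) \<longlongrightarrow> 0) at_bot"
proof -
  have "((\<lambda>y. (\<Sum>i\<le>degree f. y powr a * exp (-y) * (coeff f i * (-y) ^ i))) \<longlongrightarrow> 0) at_top"
  proof (rule tendsto_null_sum)
    fix i assume "i \<in> {..degree f}"
    show "((\<lambda>y. y powr a * exp (-y) * (coeff f i * (-y) ^ i)) \<longlongrightarrow> 0) at_top"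
    proof (rule tendsto_0_le[where K=1])
      show "\<forall>\<^sub>F y in at_top. norm (y powr a * exp (-y) * (coeff f i * (-y) ^ i))
              \<le> norm (\<bar>coeff f i\<bar> * (y powr (a + real i) * exp (-y))) * 1"
      proof (rule eventually_mono[OF eventually_gt_at_top[of 0]])
        fix y :: real assume y: "0 < y"
        have "norm (y powr a * exp (-y) * (coeff f i * (-y) ^ i))
              = \<bar>coeff f i\<bar> * (y powr a * y ^ i * exp (-y))"
          using y by (simp add: abs_mult power_abs)
        also have "y powr a * y ^ i = y powr (a + real i)"
          using y by (simp add: powr_add powr_realpow)
        finally have e1: "norm (y powr a * exp (-y) * (coeff f i * (-y) ^ i))
              = \<bar>coeff f i\<bar> * (y powr (a + real i) * exp (-y))" .
        have e2: "norm (\<bar>coeff f i\<bar> * (y powr (a + real i) * exp (-y))) * 1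
              = \<bar>coeff f i\<bar> * (y powr (a + real i) * exp (-y))" by (simp add: abs_mult)
        show "norm (y powr a * exp (-y) * (coeff f i * (-y) ^ i))
              \<le> norm (\<bar>coeff f i\<bar> * (y powr (a + real i) * exp (-y))) * 1" using e1 e2 by simp
      qed
      show "((\<lambda>y. \<bar>coeff f i\<bar> * (y powr (a + real i) * exp (-y))) \<longlongrightarrow> 0) at_top"
        using tendsto_mult_right_zero[OF powr_exp_lim0] by blast
    qed
  qed
  moreover have "(\<Sum>i\<le>degree f. y powr a * exp (-y) * (coeff f i * (-y) ^ i))
     = (- (-y)) powr a * exp (-y) * poly f (-y)" for y
    by (simp add: poly_altdef sum_distrib_left)
  ultimately have "((\<lambda>y. (- (-y)) powr a * exp (-y) * poly f (-y)) \<longlongrightarrow> 0) at_top" by simp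
  thus ?thesis by (simp add: filterlim_at_bot_mirror)
qed

lemma h_deriv:
  fixes f :: "real poly"
  assumes x: "x < 0"
  shows "((\<lambda>x. (-x) powr a * exp x * poly f x) has_real_derivative
          ((-x) powr a * exp x * poly (Top a f) x / x)) (at x)"
proof -
  have d0: "((\<lambda>x. - x) has_real_derivative -1) (at x)" by (auto intro!: derivative_eq_intros)
  have d1: "((\<lambda>x. (-x) powr a) has_real_derivative (a * (-x) powr (a - 1) * (-1))) (at x)"
    using DERIV_fun_powr[OF d0, of a] x by simp
  have d2: "((\<lambda>x. (-x) powr a * exp x) has_real_derivative
        (a * (-x) powr (a - 1) * (-1)) * exp x + (-x) powr a * exp x) (at x)"
    using DERIV_mult[OF d1 DERIV_exp] by (simp add: algebra_simps)
  have d3: "((\<lambda>x. (-x) powr a * exp x * poly f x) has_real_derivative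
        ((a * (-x) powr (a - 1) * (-1)) * exp x + (-x) powr a * exp x) * poly f x
        + ((-x) powr a * exp x) * poly (pderiv f) x) (at x)"
    using DERIV_mult[OF d2 poly_DERIV[of f x]] by (simp add: algebra_simps)
  have pw: "(-x) powr (a - 1) = (-x) powr a / (-x)"
    using x by (simp add: powr_diff)
  have "((a * (-x) powr (a - 1) * (-1)) * exp x + (-x) powr a * exp x) * poly f x
        + ((-x) powr a * exp x) * poly (pderiv f) x = (-x) powr a * exp x * poly (Top a f) x / x"
    unfolding pw Top_poly using x by (simp add: field_simps)
  with d3 show ?thesis by simp
qed

lemma count_Top:
  fixes f :: "real poly"
  assumes f0: "f \<noteq> 0" and a: "a \<ge> 0"
  shows "cnt (\<lambda>x. x < 0) f + (if a > 0 \<or> poly f 0 = 0 then 1 else 0) \<le> cnt (\<lambda>x. x < 0) (Top a f)"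
proof (rule rolle_count[OF f0 Top_nonzero[OF f0] h_deriv])
  show "\<And>x. x < 0 \<Longrightarrow> (-x) powr a * exp x * poly (Top a f) x / x = 0 \<Longrightarrow> poly (Top a f) x = 0"
    by simp
  show "\<And>x. x < 0 \<Longrightarrow> ((-x) powr a * exp x * poly f x = 0) = (poly f x = 0)" by simp
  show "((\<lambda>x. (-x) powr a * exp x * poly f x) \<longlongrightarrow> 0) at_bot" by (rule h_lim_bot)
  show "\<And>x. x < 0 \<Longrightarrow> poly f x = 0 \<Longrightarrow> order x f \<le> Suc (order x (Top a f))"
    using Top_ord[OF f0] by blast
  assume c: "a > 0 \<or> poly f 0 = 0"
  have l2: "((\<lambda>x. exp x * poly f x) \<longlongrightarrow> exp 0 * poly f 0) (at_left 0)"
    by (intro tendsto_intros)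
  have l1: "((\<lambda>x. (-x) powr a) \<longlongrightarrow> (if a > 0 then 0 else 1)) (at_left (0::real))"
  proof (cases "a > 0")
    case True
    have "((\<lambda>x::real. (-x) powr a) \<longlongrightarrow> 0) (at_left 0)"
    proof (rule tendsto_zero_powrI)
      show "((\<lambda>x::real. - x) \<longlongrightarrow> 0) (at_left 0)" by (auto intro!: tendsto_eq_intros)
      show "((\<lambda>x. a) \<longlongrightarrow> a) (at_left 0)" by simp
      show "\<forall>\<^sub>F x in at_left 0. 0 \<le> - (x::real)"
        by (auto simp: eventually_at_left_field intro: exI[of _ "-1"])
    qed (use True in simp)
    then show ?thesis using True by simp
  next
    case False
    hence a0: "a = 0" using a by simp
    have "\<forall>\<^sub>F x in at_left (0::real). (-x) powr a = 1"
      by (auto simp: eventually_at_left_field a0 intro: exI[of _ "-1"])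
    hence "((\<lambda>x::real. (-x) powr a) \<longlongrightarrow> 1) (at_left 0)"
      by (rule tendsto_eventually)
    then show ?thesis using False by simp
  qed
  have eq0: "(if a > 0 then 0 else 1) * (exp 0 * poly f 0) = (0::real)" using c by auto
  have "((\<lambda>x. (-x) powr a * (exp x * poly f x)) \<longlongrightarrow> 0) (at_left 0)"
    using tendsto_mult[OF l1 l2] unfolding eq0 .
  thus "((\<lambda>x. (-x) powr a * exp x * poly f x) \<longlongrightarrow> 0) (at_left 0)"
    by (simp add: mult.assoc)
qed



definition alt :: "(nat \<Rightarrow> real) \<Rightarrow> nat \<Rightarrow> bool" where
  "alt g m \<longleftrightarrow> (\<exists>i::nat \<Rightarrow> nat. i 0 = 0 \<and> (\<forall>s<m. i s < i (Suc s))
      \<and> (\<forall>s<m. g (i s) * g (i (Suc s)) < 0) \<and> (\<exists>N. \<forall>j\<ge>N. g j * g (i m) > 0))"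

lemma sgn_aux3: "(x::real) * y > 0 \<Longrightarrow> y * z > 0 \<Longrightarrow> x * z > 0"
  by (auto simp: zero_less_mult_iff)

lemma sgn_aux_neg: "(x::real) * y < 0 \<Longrightarrow> y * z > 0 \<Longrightarrow> x * z < 0"
  by (auto simp: zero_less_mult_iff mult_less_0_iff)

lemma sgn_aux_neg2: "(x::real) * y < 0 \<Longrightarrow> y * z < 0 \<Longrightarrow> x * z > 0"
  by (auto simp: zero_less_mult_iff mult_less_0_iff)

lemma sgn_aux4: "(X::real) * Y > 0 \<Longrightarrow> Y < 0 \<Longrightarrow> X < 0"
  by (auto simp: zero_less_mult_iff)

lemma alt_step:
  fixes g c w :: "nat \<Rightarrow> real"
  assumes alt: "alt g v" and p: "p > 0" and c0: "c 0 = - p * g 0"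
    and cj: "\<And>j. j > 0 \<Longrightarrow> c j = w j * g (j - 1) - p * g j"
    and w: "\<And>j. j > 0 \<Longrightarrow> w j > 0"
    and ev: "\<exists>N. \<forall>j\<ge>N. c j * g j > 0"
  shows "alt c (Suc v)"
proof -
  obtain i N1 where i: "i 0 = 0" "\<forall>s<v. i s < i (Suc s)" "\<forall>s<v. g (i s) * g (i (Suc s)) < 0"
    "\<forall>j\<ge>N1. g j * g (i v) > 0"
    using alt unfolding alt_def by blast
  obtain N2 where N2: "\<forall>j\<ge>N2. c j * g j > 0" using ev by blast
  have gnz: "g (i s) \<noteq> 0" if "s \<le> v" for s
  proof (cases "s < v")
    case True then show ?thesis using i(3) by force
  next
    case False
    hence "s = v" using that by simp
    thus ?thesis using i(4)[rule_format, of N1] by force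
  qed
  define first where "first s = (LEAST j. i (s - 1) < j \<and> g j * g (i s) > 0)" for s
  have first: "i (s - 1) < first s \<and> g (first s) * g (i s) > 0 \<and> first s \<le> i s
     \<and> (\<forall>j. i (s - 1) < j \<and> j < first s \<longrightarrow> \<not> g j * g (i s) > 0)"
    if s: "1 \<le> s" "s \<le> v" for s
  proof -
    have sq: "g (i s) * g (i s) > 0" using gnz[OF s(2)]
      by (cases "g (i s) > 0") (auto simp: mult_neg_neg)
    have ex: "i (s - 1) < i s \<and> g (i s) * g (i s) > 0"
      using i(2)[rule_format, of "s - 1"] s sq by auto
    show ?thesis unfolding first_def
      using LeastI[of "\<lambda>j. i (s - 1) < j \<and> g j * g (i s) > 0", OF ex]
        Least_le[of "\<lambda>j. i (s - 1) < j \<and> g j * g (i s) > 0", OF ex]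
        not_less_Least[of _ "\<lambda>j. i (s - 1) < j \<and> g j * g (i s) > 0"]
      by blast
  qed
  define J where "J = Suc (N1 + N2 + i v)"
  define i' where "i' s = (if s = 0 then 0 else if s \<le> v then first s else J)" for s
  have K: "c (i' s) * g (i s) < 0 \<and> i' s \<le> i s" if s: "s \<le> v" for s
  proof (cases "s = 0")
    case True
    have "g 0 \<noteq> 0" using gnz[of 0] i(1) by simp
    hence "g 0 * g 0 > 0" by (cases "g 0 > 0") (auto simp: mult_neg_neg)
    hence "p * (g 0 * g 0) > 0" using p by simp
    hence "c 0 * g 0 < 0" using c0 by (simp add: algebra_simps)
    then show ?thesis using True i(1) by (simp add: i'_def)
  next
    case False
    hence s1: "1 \<le> s" by simp
    define j where "j = first s"
    have F: "i (s - 1) < j" "g j * g (i s) > 0" "j \<le> i s"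
      "\<forall>k. i (s - 1) < k \<and> k < j \<longrightarrow> \<not> g k * g (i s) > 0"
      using first[OF s1 s] by (auto simp: j_def)
    have jpos: "j > 0" using F(1) by simp
    have prev: "g (j - 1) * g (i s) \<le> 0"
    proof (cases "j - 1 = i (s - 1)")
      case True
      have "s - 1 < v" using s s1 by simp
      hence "g (i (s - 1)) * g (i (Suc (s - 1))) < 0" using i(3) by blast
      moreover have "Suc (s - 1) = s" using s1 by simp
      ultimately show ?thesis using True by simp
    next
      case False
      hence "i (s - 1) < j - 1" "j - 1 < j" using F(1) by auto
      then show ?thesis using F(4) by force
    qed
    have "c j * g (i s) = w j * (g (j - 1) * g (i s)) - p * (g j * g (i s))"
      unfolding cj[OF jpos] by (simp add: algebra_simps)
    also have "\<dots> < 0"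
    proof -
      have "w j * (g (j - 1) * g (i s)) \<le> 0" using w[OF jpos] prev by (simp add: mult_nonneg_nonpos)
      moreover have "p * (g j * g (i s)) > 0" using p F(2) by simp
      ultimately show ?thesis by linarith
    qed
    finally show ?thesis using False s F(3) by (simp add: i'_def j_def)
  qed
  have iv: "i s \<le> i v" if "s \<le> v" for s
    using that
  proof (induction s rule: inc_induct)
    case base then show ?case by simp
  next
    case (step n)
    then show ?case using i(2) by (meson less_le_trans order_less_imp_le)
  qed
  have cJ: "c J * g (i v) > 0"
  proof -
    have "c J * g J > 0" using N2 by (simp add: J_def)
    moreover have "g J * g (i v) > 0" using i(4) by (simp add: J_def)
    ultimately show ?thesis by (rule sgn_aux3)
  qed
  have iJ: "i' (Suc v) = J" by (simp add: i'_def)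
  show ?thesis unfolding alt_def
  proof (intro exI[of _ i'] conjI allI impI)
    show "i' 0 = 0" by (simp add: i'_def)
  next
    fix s assume s: "s < Suc v"
    show "i' s < i' (Suc s)"
    proof (cases "Suc s \<le> v")
      case True
      have "i' s \<le> i s" using K[of s] True by simp
      moreover have "i s < i' (Suc s)" using first[of "Suc s"] True by (simp add: i'_def)
      ultimately show ?thesis by simp
    next
      case False
      hence "s = v" using s by simp
      moreover have "i' v \<le> i v" using K[of v] by simp
      ultimately show ?thesis using iJ by (simp add: J_def)
    qed
  next
    fix s assume s: "s < Suc v"
    show "c (i' s) * c (i' (Suc s)) < 0"
    proof (cases "Suc s \<le> v")
      case True
      have a1: "c (i' s) * g (i s) < 0" using K[of s] True by simp
      have a2: "c (i' (Suc s)) * g (i (Suc s)) < 0" using K[of "Suc s"] True by simp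
      have a3: "g (i s) * g (i (Suc s)) < 0" using i(3) True by simp
      have "(c (i' s) * g (i s)) * (c (i' (Suc s)) * g (i (Suc s))) > 0"
        using a1 a2 by (simp add: mult_neg_neg)
      hence "(c (i' s) * c (i' (Suc s))) * (g (i s) * g (i (Suc s))) > 0"
        by (simp add: algebra_simps)
      from sgn_aux4[OF this a3] show ?thesis .
    next
      case False
      hence sv: "s = v" using s by simp
      have a1: "c (i' v) * g (i v) < 0" using K[of v] by simp
      have "g (i v) * c J > 0" using cJ by (simp add: mult.commute)
      from sgn_aux_neg[OF a1 this] show ?thesis using sv iJ by simp
    qed
  next
    show "\<exists>N. \<forall>j\<ge>N. c j * c (i' (Suc v)) > 0"
    proof (intro exI[of _ "N1 + N2"] allI impI)
      fix j assume j: "N1 + N2 \<le> j"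
      have "c j * g j > 0" using N2 j by simp
      moreover have "g j * g (i v) > 0" using i(4) j by simp
      ultimately have "c j * g (i v) > 0" by (rule sgn_aux3)
      moreover have "g (i v) * c J > 0" using cJ by (simp add: mult.commute)
      ultimately show "c j * c (i' (Suc v)) > 0" using iJ sgn_aux3 by metis
    qed
  qed
qed



lemma poly_ev_sign:
  fixes P :: "real poly"
  assumes "P \<noteq> 0"
  shows "\<exists>n. \<forall>x\<ge>n. poly P x * lead_coeff P > 0"
proof (cases "lead_coeff P > 0")
  case True
  then obtain n where "\<forall>x\<ge>n. poly P x \<ge> lead_coeff P" using poly_pinfty_gt_lc by blast
  then show ?thesis using True by (intro exI[of _ n]) (auto intro: mult_pos_pos)
next
  case False
  hence l: "lead_coeff P < 0" using assms by (simp add: less_le)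
  hence "lead_coeff (-P) > 0" by simp
  then obtain n where "\<forall>x\<ge>n. poly (-P) x \<ge> lead_coeff (-P)" using poly_pinfty_gt_lc by blast
  then show ?thesis using l by (intro exI[of _ n]) (force intro: mult_neg_neg)
qed

lemma E_ev:
  fixes Q :: "real poly"
  assumes "Q \<noteq> 0"
  shows "\<exists>N. \<forall>j\<ge>N. exp_poly_coeff Q j * lead_coeff Q > 0"
proof -
  obtain P where P: "degree P = degree Q" "lead_coeff P = lead_coeff Q"
    "\<forall>j. exp_poly_coeff Q j = poly P (of_nat j)" using E_poly_ex by blast
  have "P \<noteq> 0" using P(2) assms by auto
  then obtain n where n: "\<forall>x\<ge>n. poly P x * lead_coeff P > 0" using poly_ev_sign by blast
  show ?thesis
  proof (intro exI[of _ "nat \<lceil>n\<rceil>"] allI impI)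
    fix j assume "nat \<lceil>n\<rceil> \<le> j"
    hence "real j \<ge> n" by linarith
    thus "exp_poly_coeff Q j * lead_coeff Q > 0" using n P by simp
  qed
qed

lemma cnt_pos_ex: "cnt P f > 0 \<Longrightarrow> \<exists>x. P x \<and> poly f x = 0"
  unfolding cnt_def by (metis (mono_tags, lifting) empty_Collect_eq less_irrefl sum.empty)

lemma descartes:
  "\<forall>Q::real poly. Q \<noteq> 0 \<longrightarrow> poly Q 0 \<noteq> 0 \<longrightarrow> cnt (\<lambda>x. x > 0) Q = m
     \<longrightarrow> alt (exp_poly_coeff Q) m"
proof (induction m)
  case 0
  show ?case
  proof (intro allI impI)
    fix Q :: "real poly" assume Q: "Q \<noteq> 0" "poly Q 0 \<noteq> 0" "cnt (\<lambda>x. x > 0) Q = 0"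
    obtain N where N: "\<forall>j\<ge>N. exp_poly_coeff Q j * lead_coeff Q > 0" using E_ev[OF Q(1)] by blast
    obtain n where n: "\<forall>x\<ge>n. poly Q x * lead_coeff Q > 0" using poly_ev_sign[OF Q(1)] by blast
    have s0: "poly Q 0 * lead_coeff Q > 0"
    proof (rule ccontr)
      assume "\<not> poly Q 0 * lead_coeff Q > 0"
      moreover have "lead_coeff Q \<noteq> 0" using Q(1) by simp
      ultimately have neg: "poly Q 0 * lead_coeff Q < 0" using Q(2)
        by (metis linorder_neqE_linordered_idom mult_eq_0_iff)
      define x where "x = max n 1"
      have "poly Q x * lead_coeff Q > 0" using n by (simp add: x_def)
      hence "poly Q 0 * poly Q x < 0" using neg
        by (metis mult.commute sgn_aux_neg)
      moreover have "(0::real) < x" by (simp add: x_def)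
      ultimately obtain r where "0 < r" "r < x" "poly Q r = 0" using poly_IVT[of 0 x Q] by blast
      hence "cnt (\<lambda>x. x > 0) Q > 0" using cnt_pos[OF Q(1)] by blast
      thus False using Q(3) by simp
    qed
    show "alt (exp_poly_coeff Q) 0" unfolding alt_def
    proof (intro exI[of _ "\<lambda>_. 0"] conjI exI[of _ N] allI impI)
      fix j assume "N \<le> j"
      hence "exp_poly_coeff Q j * lead_coeff Q > 0" using N by simp
      moreover have "lead_coeff Q * exp_poly_coeff Q 0 > 0" using s0 by (simp add: E_at0 mult.commute)
      ultimately show "exp_poly_coeff Q j * exp_poly_coeff Q 0 > 0" by (rule sgn_aux3)
    qed auto
  qed
next
  case (Suc m)
  show ?case
  proof (intro allI impI)
    fix Q :: "real poly" assume Q: "Q \<noteq> 0" "poly Q 0 \<noteq> 0" "cnt (\<lambda>x. x > 0) Q = Suc m"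
    obtain p where p: "p > 0" "poly Q p = 0" using cnt_pos_ex[of "\<lambda>x. x > 0" Q] Q(3) by auto
    have "[:-p, 1:] dvd Q" using p(2) by (simp add: dvd_iff_poly_eq_0)
    then obtain Q1 where Q1: "Q = [:-p, 1:] * Q1" by (elim dvdE)
    have Q10: "Q1 \<noteq> 0" using Q(1) Q1 by auto
    have lin0: "[:-p, 1:] \<noteq> 0" by simp
    have "cnt (\<lambda>x. x > 0) Q = 1 + cnt (\<lambda>x. x > 0) Q1"
      unfolding Q1 cnt_mult[OF lin0 Q10] using cnt_linear[of "\<lambda>x. x > 0" p] p(1) by simp
    hence cQ1: "cnt (\<lambda>x. x > 0) Q1 = m" using Q(3) by simp
    have pQ1: "poly Q1 0 \<noteq> 0" using Q(2) Q1 by simp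
    have alt1: "alt (exp_poly_coeff Q1) m" using Suc.IH Q10 pQ1 cQ1 by blast
    have Qeq: "Q = pCons 0 Q1 + smult (-p) Q1" unfolding Q1 by simp
    have rec: "exp_poly_coeff Q j = (if j = 0 then 0 else of_nat j * exp_poly_coeff Q1 (j - 1))
                 - p * exp_poly_coeff Q1 j" for j
    proof -
      have "exp_poly_coeff Q j = exp_poly_coeff (pCons 0 Q1) j + exp_poly_coeff (smult (-p) Q1) j"
        by (subst Qeq) (rule E_add)
      thus ?thesis unfolding E_smult E_pCons0 by simp
    qed
    show "alt (exp_poly_coeff Q) (Suc m)"
    proof (rule alt_step[OF alt1 p(1), where w = "\<lambda>j. real j"])
      show "exp_poly_coeff Q 0 = - p * exp_poly_coeff Q1 0" using rec[of 0] by simp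
      show "\<And>j. 0 < j \<Longrightarrow> exp_poly_coeff Q j = real j * exp_poly_coeff Q1 (j - 1) - p * exp_poly_coeff Q1 j"
        using rec by simp
      show "\<And>j. 0 < j \<Longrightarrow> 0 < real j" by simp
      obtain N1 where N1: "\<forall>j\<ge>N1. exp_poly_coeff Q j * lead_coeff Q > 0" using E_ev[OF Q(1)] by blast
      obtain N2 where N2: "\<forall>j\<ge>N2. exp_poly_coeff Q1 j * lead_coeff Q1 > 0" using E_ev[OF Q10] by blast
      have l1: "lead_coeff Q = lead_coeff [:-p, 1:] * lead_coeff Q1" unfolding Q1 by (rule lead_coeff_mult)
      have ll: "lead_coeff Q = lead_coeff Q1" using l1 by simp
      show "\<exists>N. \<forall>j\<ge>N. exp_poly_coeff Q j * exp_poly_coeff Q1 j > 0"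
      proof (intro exI[of _ "N1 + N2"] allI impI)
        fix j assume j: "N1 + N2 \<le> j"
        have "exp_poly_coeff Q j * lead_coeff Q > 0" using N1 j by simp
        moreover have "lead_coeff Q * exp_poly_coeff Q1 j > 0" using N2 j ll by (simp add: mult.commute)
        ultimately show "exp_poly_coeff Q j * exp_poly_coeff Q1 j > 0" by (rule sgn_aux3)
      qed
    qed
  qed
qed



definition ofp :: "real poly \<Rightarrow> complex poly" where
  "ofp p = map_poly complex_of_real p"

lemma coeff_ofp: "coeff (ofp p) n = of_real (coeff p n)"
  by (simp add: ofp_def coeff_map_poly)

lemma ofp_add: "ofp (p + q) = ofp p + ofp q"
  by (rule poly_eqI) (simp add: coeff_ofp)

lemma ofp_smult: "ofp (smult a q) = smult (of_real a) (ofp q)"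
  by (rule poly_eqI) (simp add: coeff_ofp)

lemma ofp_pCons: "ofp (pCons a p) = pCons (of_real a) (ofp p)"
  by (rule poly_eqI) (simp add: coeff_ofp coeff_pCons split: nat.splits)

lemma ofp_0[simp]: "ofp 0 = 0"
  by (rule poly_eqI) (simp add: coeff_ofp)

lemma ofp_mult: "ofp (p * q) = ofp p * ofp q"
  by (induction p) (simp_all add: ofp_add ofp_smult ofp_pCons)

lemma ofp_linear: "ofp [:b, 1:] = [:of_real b, 1:]"
  by (simp add: ofp_pCons)

lemma poly_ofp: "poly (ofp p) (of_real x) = of_real (poly p x)"
  by (induction p) (simp_all add: ofp_pCons)

lemma cpoly_zero_nat:
  fixes P :: "complex poly"
  assumes "\<forall>j::nat. poly P (of_nat j) = 0"
  shows "P = 0"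
proof (rule ccontr)
  assume "P \<noteq> 0"
  hence fin: "finite {z. poly P z = 0}" by (rule poly_roots_finite)
  have "range (of_nat :: nat \<Rightarrow> complex) \<subseteq> {z. poly P z = 0}" using assms by auto
  hence "finite (range (of_nat :: nat \<Rightarrow> complex))" using fin by (rule finite_subset)
  moreover have "inj (of_nat :: nat \<Rightarrow> complex)" by (simp add: inj_of_nat)
  ultimately show False using finite_imageD by fastforce
qed

lemma fact_lemma:
  "\<forall>Pr A. ofp Pr = smult c (prod_mset (image_mset (\<lambda>a. [:a, 1:]) A))
     \<longrightarrow> image_mset complex_of_real (mset bs) \<subseteq># A
     \<longrightarrow> (\<exists>Q0. Pr = Q0 * prod_list (map (\<lambda>b. [:b, 1:]) bs))"
proof (induction bs)
  case Nil
  then show ?case by simp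
next
  case (Cons b bs)
  show ?case
  proof (intro allI impI)
    fix Pr A
    assume h: "ofp Pr = smult c (prod_mset (image_mset (\<lambda>a. [:a, 1:]) A))"
      and sub: "image_mset complex_of_real (mset (b # bs)) \<subseteq># A"
    have bA: "of_real b \<in># A" using sub by (auto dest: mset_subset_eqD)
    define A' where "A' = A - {#of_real b#}"
    have AA: "A = add_mset (of_real b) A'" using bA by (simp add: A'_def)
    have h2: "ofp Pr = [:of_real b, 1:] * smult c (prod_mset (image_mset (\<lambda>a. [:a, 1:]) A'))"
      using h by (simp add: AA mult_ac)
    have "of_real (poly Pr (-b)) = poly (ofp Pr) (of_real (-b))" by (rule poly_ofp[symmetric])
    also have "\<dots> = 0" unfolding h2 by simp
    finally have "poly Pr (-b) = 0" by simp
    hence "[:b, 1:] dvd Pr" by (simp add: dvd_iff_poly_eq_0)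
    then obtain Pr1 where Pr1: "Pr = [:b, 1:] * Pr1" by (elim dvdE)
    have "[:of_real b, 1:] * ofp Pr1 = [:of_real b, 1:] * smult c (prod_mset (image_mset (\<lambda>a. [:a, 1:]) A'))"
      using h2 unfolding Pr1 ofp_mult ofp_linear .
    hence h3: "ofp Pr1 = smult c (prod_mset (image_mset (\<lambda>a. [:a, 1:]) A'))"
      by (subst (asm) mult_left_cancel) simp_all
    have sub': "image_mset complex_of_real (mset bs) \<subseteq># A'"
      using sub unfolding AA by simp
    obtain Q0 where Q0: "Pr1 = Q0 * prod_list (map (\<lambda>b. [:b, 1:]) bs)"
      using Cons.IH h3 sub' by blast
    show "\<exists>Q0. Pr = Q0 * prod_list (map (\<lambda>b. [:b, 1:]) (b # bs))"
      by (intro exI[of _ Q0]) (simp add: Pr1 Q0 mult_ac)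
  qed
qed

lemma E_foldr: "exp_poly_coeff (foldr Top bs f) j = prod_list (map (\<lambda>b. of_nat j + b) bs) * exp_poly_coeff f j"
  by (induction bs) (simp_all add: E_Top)

lemma Top_0[simp]: "Top a 0 = 0"
  by (simp add: Top_def)

lemma foldr_Top_nonzero: "f \<noteq> 0 \<Longrightarrow> foldr Top bs f \<noteq> 0"
  by (induction bs) (simp_all add: Top_nonzero)

lemma count_pos_chain:
  assumes "f \<noteq> 0" "\<forall>b\<in>set ps. b > 0"
  shows "cnt (\<lambda>x. x < 0) f + length ps \<le> cnt (\<lambda>x. x < 0) (foldr Top ps f)"
  using assms
proof (induction ps)
  case Nil then show ?case by simp
next
  case (Cons b ps)
  have nz: "foldr Top ps f \<noteq> 0" using foldr_Top_nonzero Cons.prems by blast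
  have "cnt (\<lambda>x. x < 0) (foldr Top ps f) + 1 \<le> cnt (\<lambda>x. x < 0) (Top b (foldr Top ps f))"
    using count_Top[OF nz, of b] Cons.prems by simp
  then show ?case using Cons by simp
qed

lemma count_zero_chain:
  assumes "f \<noteq> 0"
  shows "cnt (\<lambda>x. x < 0) f + (q - 1) \<le> cnt (\<lambda>x. x < 0) (foldr Top (replicate q 0) f)
    \<and> (q \<ge> 1 \<longrightarrow> poly (foldr Top (replicate q 0) f) 0 = 0)"
proof (induction q)
  case 0 then show ?case by simp
next
  case (Suc q)
  define G where "G = foldr Top (replicate q 0) f"
  have nz: "G \<noteq> 0" unfolding G_def using foldr_Top_nonzero assms by blast
  have c: "cnt (\<lambda>x. x < 0) G + (if poly G 0 = 0 then 1 else 0) \<le> cnt (\<lambda>x. x < 0) (Top 0 G)"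
    using count_Top[OF nz, of 0] by simp
  have p0: "poly (Top 0 G) 0 = 0" by (simp add: Top_poly)
  show ?case
  proof (cases "q = 0")
    case True
    then show ?thesis using c p0 by (simp add: G_def)
  next
    case False
    hence "poly G 0 = 0" "cnt (\<lambda>x. x < 0) f + (q - 1) \<le> cnt (\<lambda>x. x < 0) G"
      using Suc.IH by (auto simp: G_def)
    then show ?thesis using c p0 False by (simp add: G_def)
  qed
qed



lemma Xk_pCons: "[:0, 1:] ^ Suc k * Q = pCons 0 ([:0, 1:] ^ k * (Q::real poly))"
  unfolding power_Suc mult.assoc by (rule pc0[symmetric])

lemma E_Xk:
  "\<exists>w. (\<forall>j. w j > (0::real)) \<and> (\<forall>j. exp_poly_coeff ([:0, 1:] ^ k * Q) (j + k) = w j * exp_poly_coeff Q j)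
     \<and> (\<forall>j<k. exp_poly_coeff ([:0, 1:] ^ k * Q) j = 0)"
proof (induction k)
  case 0
  then show ?case by (intro exI[of _ "\<lambda>_. 1"]) simp
next
  case (Suc k)
  then obtain w where w: "\<forall>j. w j > (0::real)" "\<forall>j. exp_poly_coeff ([:0, 1:] ^ k * Q) (j + k) = w j * exp_poly_coeff Q j"
    "\<forall>j<k. exp_poly_coeff ([:0, 1:] ^ k * Q) j = 0" by blast
  show ?case
  proof (intro exI[of _ "\<lambda>j. real (j + Suc k) * w j"] conjI allI impI)
    fix j show "0 < real (j + Suc k) * w j" using w(1) by simp
  next
    fix j
    show "exp_poly_coeff ([:0, 1:] ^ Suc k * Q) (j + Suc k) = real (j + Suc k) * w j * exp_poly_coeff Q j"
      unfolding Xk_pCons E_pCons0 using w(2) by simp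
  next
    fix j assume j: "j < Suc k"
    show "exp_poly_coeff ([:0, 1:] ^ Suc k * Q) j = 0"
      unfolding Xk_pCons E_pCons0 using w(3) j by auto
  qed
qed

lemma mono_idx:
  fixes i :: "nat \<Rightarrow> nat"
  assumes "\<forall>s<m. i s < i (Suc s)" "s \<le> s'" "s' \<le> m"
  shows "i s \<le> i s'"
  using assms(2,3)
proof (induction s' rule: dec_induct)
  case base then show ?case by simp
next
  case (step n)
  then show ?case using assms(1) by (meson Suc_le_lessD le_less_trans less_imp_le_nat)
qed

lemma poly_prod_lin: "poly (prod_list (map (\<lambda>b. [:b, 1:]) bs)) (x::real) = prod_list (map (\<lambda>b. b + x) bs)"
  by (induction bs) (simp_all add: algebra_simps)

lemma of_real_Re_eq: "Im a = 0 \<Longrightarrow> complex_of_real (Re a) = a"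
  by (simp add: complex_eq_iff)



theorem proposition1p3:
  fixes n :: nat and R :: "real poly" and A :: "complex multiset" and c :: complex
  assumes "n \<ge> 2"
    and "degree R = n - 1"
    and "size A = n - 1"
    and "c \<noteq> 0"
    and "\<forall>j::nat. complex_of_real (exp_poly_coeff R j) = c * (\<Prod>a\<in>#A. (of_nat j + a))"
  shows "(\<exists>S. S \<subseteq> set_mset A
              \<and> (\<forall>a\<in>S. Im a = 0 \<and> Re a < 0)
              \<and> card S \<ge> (\<Sum>x\<in>{x::real. x > 0 \<and> poly R x = 0}. order x R) + (order 0 R - 1)
              \<and> (\<forall>t\<in>{1..order 0 R - 1}. - of_nat t \<in> S))
         \<and> (order 0 R \<ge> 1 \<longrightarrow> 0 \<in># A)
         \<and> (\<Sum>x\<in>{x::real. x < 0 \<and> poly R x = 0}. order x R)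
              \<ge> size (filter_mset (\<lambda>a. Im a = 0 \<and> Re a > 0) A) + (count A 0 - 1)
         \<and> (count A 0 \<ge> 1 \<longrightarrow> poly R 0 = 0)"
proof -
  note H = assms(5)
  have R0: "R \<noteq> 0" using assms(1,2) by auto
  obtain Pr where Pr: "degree Pr = degree R" "lead_coeff Pr = lead_coeff R"
    "\<forall>j. exp_poly_coeff R j = poly Pr (of_nat j)" using E_poly_ex by blast
  define PA where "PA = smult c (prod_mset (image_mset (\<lambda>a. [:a, 1:]) A))"
  have polyPA: "poly PA z = c * (\<Prod>a\<in>#A. z + a)" for z
  proof -
    have "poly PA z = c * (\<Prod>a\<in>#A. a + z)" by (simp add: PA_def poly_prod_mset)
    also have "(\<Prod>a\<in>#A. a + z) = (\<Prod>a\<in>#A. z + a)"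
      by (rule arg_cong[where f = prod_mset], rule image_mset_cong) (simp add: add.commute)
    finally show ?thesis .
  qed
  have ofPr: "ofp Pr = PA"
  proof -
    have "ofp Pr - PA = 0"
    proof (rule cpoly_zero_nat, rule allI)
      fix j :: nat
      have "poly (ofp Pr) (of_nat j) = poly (ofp Pr) (of_real (real j))" by simp
      also have "\<dots> = of_real (exp_poly_coeff R j)" unfolding poly_ofp using Pr(3) by simp
      also have "\<dots> = poly PA (of_nat j)" using H polyPA by simp
      finally show "poly (ofp Pr - PA) (of_nat j) = 0" by simp
    qed
    thus ?thesis by simp
  qed
  have rootA: "- complex_of_real t \<in># A" if "poly Pr t = 0" for t
  proof -
    have "c * (\<Prod>a\<in>#A. of_real t + a) = poly PA (of_real t)" using polyPA by simp
    also have "\<dots> = of_real (poly Pr t)" using poly_ofp[of Pr t] ofPr by simp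
    also have "\<dots> = 0" using that by simp
    finally have "(\<Prod>a\<in>#A. of_real t + a) = 0" using assms(4) by simp
    then obtain a where "a \<in># A" "of_real t + a = 0" by auto
    thus ?thesis by (metis add.commute add_eq_0_iff)
  qed
  have rootE: "- of_nat j \<in># A" if "exp_poly_coeff R j = 0" for j
  proof -
    have "c * (\<Prod>a\<in>#A. of_nat j + a) = 0" using H that by (metis of_real_0)
    hence "(\<Prod>a\<in>#A. of_nat j + a) = 0" using assms(4) by simp
    then obtain a where "a \<in># A" "of_nat j + a = 0" by auto
    thus ?thesis by (metis add.commute add_eq_0_iff)
  qed
  define k where "k = order 0 R"
  obtain Q where Q: "R = [:0, 1:] ^ k * Q" "\<not> [:0, 1:] dvd Q"
    using order_decomp[OF R0, of 0] unfolding k_def by auto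
  have Q0: "Q \<noteq> 0" using Q R0 by auto
  have pQ0: "poly Q 0 \<noteq> 0" using Q(2) dvd_iff_poly_eq_0[of 0 Q] by simp
  obtain w where w: "\<forall>j. w j > (0::real)" "\<forall>j. exp_poly_coeff R (j + k) = w j * exp_poly_coeff Q j"
    "\<forall>j<k. exp_poly_coeff R j = 0" using E_Xk[of k Q] unfolding Q(1)[symmetric] by blast
  have Xk0: "([:0, 1:] ^ k :: real poly) \<noteq> 0" by simp
  have cX: "cnt (\<lambda>x. x > 0) ([:0, 1:] ^ k) = 0"
    unfolding cnt_def by (rule sum.neutral) (auto simp: poly_power)
  define m where "m = cnt (\<lambda>x. x > 0) Q"
  have mR: "cnt (\<lambda>x. x > 0) R = m"
    unfolding Q(1) cnt_mult[OF Xk0 Q0] cX m_def by simp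
  have "alt (exp_poly_coeff Q) m" using descartes Q0 pQ0 m_def by blast
  then obtain i where i: "i 0 = 0" "\<forall>s<m. i s < i (Suc s)"
    "\<forall>s<m. exp_poly_coeff Q (i s) * exp_poly_coeff Q (i (Suc s)) < 0"
    unfolding alt_def by blast
  have ex_t: "\<exists>t. s < m \<longrightarrow> real (i s + k) < t \<and> t < real (i (Suc s) + k) \<and> poly Pr t = 0" for s
  proof (cases "s < m")
    case True
    have "exp_poly_coeff R (i s + k) * exp_poly_coeff R (i (Suc s) + k)
        = (w (i s) * w (i (Suc s))) * (exp_poly_coeff Q (i s) * exp_poly_coeff Q (i (Suc s)))"
    proof -
      have e1: "exp_poly_coeff R (i s + k) = w (i s) * exp_poly_coeff Q (i s)" using w(2) by blast
      have e2: "exp_poly_coeff R (i (Suc s) + k) = w (i (Suc s)) * exp_poly_coeff Q (i (Suc s))"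
        using w(2) by blast
      show ?thesis unfolding e1 e2 by (simp only: mult_ac)
    qed
    also have "\<dots> < 0" using True i(3) w(1) by (simp add: mult_pos_neg)
    finally have "poly Pr (real (i s + k)) * poly Pr (real (i (Suc s) + k)) < 0"
      using Pr(3) by (metis of_nat_add)
    moreover have "real (i s + k) < real (i (Suc s) + k)" using i(2) True by simp
    ultimately show ?thesis using poly_IVT by blast
  qed simp
  have ex_t': "\<forall>s. \<exists>t. s < m \<longrightarrow> real (i s + k) < t \<and> t < real (i (Suc s) + k) \<and> poly Pr t = 0"
    using ex_t by blast
  obtain t where t0: "\<forall>s. s < m \<longrightarrow> real (i s + k) < t s \<and> t s < real (i (Suc s) + k) \<and> poly Pr (t s) = 0"
    using choice[OF ex_t'] by blast
  have t: "\<forall>s<m. real (i s + k) < t s \<and> t s < real (i (Suc s) + k) \<and> poly Pr (t s) = 0"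
    using t0 by blast
  have tmono: "t s < t s'" if "s < s'" "s' < m" for s s'
  proof -
    have "i (Suc s) \<le> i s'" using mono_idx[OF i(2), of "Suc s" s'] that by simp
    moreover have "t s < real (i (Suc s) + k)" using t that by simp
    moreover have "real (i s' + k) < t s'" using t that by simp
    ultimately show ?thesis by linarith
  qed
  have tinj: "inj_on t {..<m}"
    by (rule inj_onI) (metis lessThan_iff linorder_neqE_nat order_less_irrefl tmono)
  have tk: "t s > real k" if "s < m" for s using t that by force
  define S1 where "S1 = (\<lambda>s. - complex_of_real (t s)) ` {..<m}"
  define S2 where "S2 = (\<lambda>u. - complex_of_nat u) ` {1..k - 1}"
  have cS1: "card S1 = m"
  proof -
    have "inj_on (\<lambda>s. - complex_of_real (t s)) {..<m}"
      using tinj by (auto simp: inj_on_def)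
    thus ?thesis unfolding S1_def by (simp add: card_image)
  qed
  have cS2: "card S2 = k - 1"
  proof -
    have "inj_on (\<lambda>u. - complex_of_nat u) {1..k - 1}" by (auto simp: inj_on_def)
    thus ?thesis unfolding S2_def by (simp add: card_image)
  qed
  have disj: "S1 \<inter> S2 = {}"
  proof -
    have "Re z < - real k" if "z \<in> S1" for z using that tk by (auto simp: S1_def)
    moreover have "Re z > - real k" if "z \<in> S2" for z using that by (auto simp: S2_def)
    ultimately show ?thesis by force
  qed
  define S where "S = S1 \<union> S2"
  have part1: "S \<subseteq> set_mset A
              \<and> (\<forall>a\<in>S. Im a = 0 \<and> Re a < 0)
              \<and> card S \<ge> (\<Sum>x\<in>{x::real. x > 0 \<and> poly R x = 0}. order x R) + (order 0 R - 1)
              \<and> (\<forall>t\<in>{1..order 0 R - 1}. - of_nat t \<in> S)"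
  proof (intro conjI)
    show "S \<subseteq> set_mset A"
    proof
      fix z assume "z \<in> S"
      then consider s where "s < m" "z = - complex_of_real (t s)" | u where "u \<in> {1..k-1}" "z = - of_nat u"
        by (auto simp: S_def S1_def S2_def)
      then show "z \<in> set_mset A"
      proof cases
        case 1 then show ?thesis using rootA t by auto
      next
        case 2
        hence "u < k" by auto
        hence "exp_poly_coeff R u = 0" using w(3) by simp
        then show ?thesis using rootE 2 by simp
      qed
    qed
    show "\<forall>a\<in>S. Im a = 0 \<and> Re a < 0"
      using tk by (force simp: S_def S1_def S2_def)
    have "card S = m + (k - 1)"
      unfolding S_def using card_Un_disjoint[OF _ _ disj] cS1 cS2 by (simp add: S1_def S2_def)
    moreover have "(\<Sum>x\<in>{x::real. x > 0 \<and> poly R x = 0}. order x R) = m"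
      using mR by (simp add: cnt_def)
    ultimately show "card S \<ge> (\<Sum>x\<in>{x::real. x > 0 \<and> poly R x = 0}. order x R) + (order 0 R - 1)"
      by (simp add: k_def)
    show "\<forall>t\<in>{1..order 0 R - 1}. - of_nat t \<in> S"
      by (auto simp: S_def S2_def k_def)
  qed
  have part1b: "order 0 R \<ge> 1 \<longrightarrow> 0 \<in># A"
  proof
    assume "order 0 R \<ge> 1"
    hence "poly R 0 = 0" using order_root[of R 0] by auto
    hence "exp_poly_coeff R 0 = 0" by (simp add: E_at0)
    thus "0 \<in># A" using rootE[of 0] by simp
  qed
  have part2b: "count A 0 \<ge> 1 \<longrightarrow> poly R 0 = 0"
  proof
    assume "count A 0 \<ge> 1"
    hence "0 \<in># A" by (simp add: count_greater_zero_iff[symmetric] del: count_greater_zero_iff)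
    hence P0: "(\<Prod>a\<in>#A. of_nat 0 + a) = (0::complex)" by auto
    have h0: "complex_of_real (exp_poly_coeff R 0) = c * (\<Prod>a\<in>#A. of_nat 0 + a)" using H by blast
    hence "complex_of_real (exp_poly_coeff R 0) = 0" unfolding P0 by simp
    thus "poly R 0 = 0" by (simp add: E_at0)
  qed
  define F where "F = filter_mset (\<lambda>a. Im a = 0 \<and> Re a > 0) A"
  define q where "q = count A 0"
  obtain ps where ps: "mset ps = image_mset Re F" using ex_mset by blast
  define bs where "bs = replicate q 0 @ ps"
  have imF: "image_mset (\<lambda>a. complex_of_real (Re a)) F = F"
  proof -
    have "image_mset (\<lambda>a. complex_of_real (Re a)) F = image_mset (\<lambda>a. a) F"
      by (rule image_mset_cong) (simp add: F_def of_real_Re_eq)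
    thus ?thesis by simp
  qed
  have sub: "image_mset complex_of_real (mset bs) \<subseteq># A"
  proof -
    have "image_mset complex_of_real (mset bs) = replicate_mset q 0 + F"
      unfolding bs_def using imF by (simp add: ps image_mset.compositionality o_def)
    also have "\<dots> \<subseteq># A"
    proof (rule mset_subset_eqI)
      fix x
      show "count (replicate_mset q 0 + F) x \<le> count A x"
        by (cases "x = 0") (auto simp: F_def q_def)
    qed
    finally show ?thesis .
  qed
  obtain Q0 where Q0: "Pr = Q0 * prod_list (map (\<lambda>b. [:b, 1:]) bs)"
    using fact_lemma[of c bs] ofPr sub unfolding PA_def by blast
  obtain R0 where R0E: "\<forall>j. exp_poly_coeff R0 j = poly Q0 (of_nat j)" using E_surj by blast
  have Req: "R = foldr Top bs R0"
  proof (rule E_eqI, rule allI)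
    fix j
    have "exp_poly_coeff R j = poly Q0 (real j) * prod_list (map (\<lambda>b. b + real j) bs)"
      using Pr(3) unfolding Q0 poly_mult poly_prod_lin by simp
    also have "prod_list (map (\<lambda>b. b + real j) bs) = prod_list (map (\<lambda>b. real j + b) bs)"
      by (simp add: add.commute)
    finally show "exp_poly_coeff R j = exp_poly_coeff (foldr Top bs R0) j"
      by (simp add: E_foldr R0E mult.commute)
  qed
  have R00: "R0 \<noteq> 0"
  proof
    assume "R0 = 0"
    hence "foldr Top bs R0 = 0" by (induction bs) simp_all
    thus False using Req R0 by simp
  qed
  have pos: "\<forall>b\<in>set ps. b > 0"
  proof
    fix b assume "b \<in> set ps"
    hence "b \<in># image_mset Re F" using ps by (metis set_mset_mset)
    thus "b > 0" by (auto simp: F_def)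
  qed
  have c1: "length ps \<le> cnt (\<lambda>x. x < 0) (foldr Top ps R0)"
    using count_pos_chain[OF R00 pos] by simp
  have nz: "foldr Top ps R0 \<noteq> 0" using foldr_Top_nonzero R00 by blast
  have c2: "cnt (\<lambda>x. x < 0) (foldr Top ps R0) + (q - 1) \<le> cnt (\<lambda>x. x < 0) R"
    using count_zero_chain[OF nz, of q] Req unfolding bs_def by simp
  have lenps: "length ps = size F"
  proof -
    have "length ps = size (mset ps)" by simp
    also have "\<dots> = size F" using ps by simp
    finally show ?thesis .
  qed
  have part2: "(\<Sum>x\<in>{x::real. x < 0 \<and> poly R x = 0}. order x R)
              \<ge> size (filter_mset (\<lambda>a. Im a = 0 \<and> Re a > 0) A) + (count A 0 - 1)"
    using c1 c2 lenps unfolding cnt_def F_def q_def by simp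
  show ?thesis using part1 part1b part2 part2b by blast
qed


end
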